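(* Let $A \in \mathbb{Q}^{m\times n}$ and let $k \le n$ be a positive integer. If $\operatorname{spark}(A) > k$, then there exists a constant $\varepsilon > 0$ with encoding length polynomially bounded by that of $A$ such that $\|Ax\|_2^2 \ge \varepsilon\|x\|_2^2$ for all $x \in \mathbb{R}^n$ with $\|x\|_0 \le k$.
   Context: $\operatorname{spark}(A) := \min\{\|x\|_0 : Ax = 0,\ x\ne 0\}$, where $\|x\|_0$ is the number of nonzero entries of $x$; $\|\cdot\|_2$ is the Euclidean norm. Encoding length refers to binary encoding length of rational numbers. *)

theory Defs
  imports Complex_Main "HOL-Library.Extended_Nat"
begin

text \<open>Matrices A in Q^(m x n) are represented as functions nat => nat => rat,
  with only the entries A i j for i < m, j < n being relevant.
  Vectors in R^n are functions nat => real, with entries x j for j < n.\<close>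

definition mat_vec :: "nat \<Rightarrow> nat \<Rightarrow> (nat \<Rightarrow> nat \<Rightarrow> rat) \<Rightarrow> (nat \<Rightarrow> real) \<Rightarrow> (nat \<Rightarrow> real)" where
  "mat_vec m n A x = (\<lambda>i. if i < m then (\<Sum>j<n. real_of_rat (A i j) * x j) else 0)"

definition sq_norm2 :: "nat \<Rightarrow> (nat \<Rightarrow> real) \<Rightarrow> real" where
  "sq_norm2 n x = (\<Sum>j<n. (x j)^2)"

definition l0 :: "nat \<Rightarrow> (nat \<Rightarrow> real) \<Rightarrow> nat" where
  "l0 n x = card {j. j < n \<and> x j \<noteq> 0}"

definition in_Rn :: "nat \<Rightarrow> (nat \<Rightarrow> real) \<Rightarrow> bool" where
  "in_Rn n x \<longleftrightarrow> (\<forall>j\<ge>n. x j = 0)"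

text \<open>spark(A) = min ||x||_0 over nonzero x in R^n with Ax = 0; infinity if no such x.\<close>
definition spark :: "nat \<Rightarrow> nat \<Rightarrow> (nat \<Rightarrow> nat \<Rightarrow> rat) \<Rightarrow> enat" where
  "spark m n A = (INF x \<in> {x. in_Rn n x \<and> x \<noteq> (\<lambda>_. 0) \<and> mat_vec m n A x = (\<lambda>_. 0)}.
      enat (l0 n x))"

text \<open>Binary encoding lengths (Schrijver's convention).\<close>
definition int_size :: "int \<Rightarrow> nat" where
  "int_size z = 1 + nat \<lceil>log 2 (real_of_int (\<bar>z\<bar> + 1))\<rceil>"

definition rat_size :: "rat \<Rightarrow> nat" where
  "rat_size r = (case quotient_of r of (p, q) \<Rightarrow> int_size p + nat \<lceil>log 2 (real_of_int (q + 1))\<rceil>)"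

definition mat_size :: "nat \<Rightarrow> nat \<Rightarrow> (nat \<Rightarrow> nat \<Rightarrow> rat) \<Rightarrow> nat" where
  "mat_size m n A = m * n + (\<Sum>i<m. \<Sum>j<n. rat_size (A i j))"

end

theory Submission imports Defs "Jordan_Normal_Form.Determinant" "HOL-Combinatorics.Permutations" begin

lemma det_bound:
  fixes N :: "real mat"
  assumes N: "N \<in> carrier_mat d d" and g: "g \<ge> 0"
    and b: "\<And>i j. i < d \<Longrightarrow> j < d \<Longrightarrow> \<bar>N $$ (i,j)\<bar> \<le> g"
  shows "\<bar>det N\<bar> \<le> fact d * g ^ d"
proof -
  let ?P = "{p. p permutes {0..<d}}"
  have fin: "finite ?P" by (simp add: finite_permutations)
  have "\<bar>det N\<bar> = \<bar>\<Sum>p\<in>?P. signof p * (\<Prod>i = 0..<d. N $$ (i, p i))\<bar>"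
    using det_def'[OF N] by simp
  also have "\<dots> \<le> (\<Sum>p\<in>?P. \<bar>signof p * (\<Prod>i = 0..<d. N $$ (i, p i))\<bar>)"
    by (rule sum_abs)
  also have "\<dots> \<le> (\<Sum>p\<in>?P. g ^ d)"
  proof (rule sum_mono)
    fix p assume p: "p \<in> ?P"
    have "\<bar>signof p * (\<Prod>i = 0..<d. N $$ (i, p i))\<bar> = (\<Prod>i = 0..<d. \<bar>N $$ (i, p i)\<bar>)"
      by (simp add: abs_mult abs_prod sign_def)
    also have "\<dots> \<le> (\<Prod>i = 0..<d. g)"
    proof (rule prod_mono)
      fix i assume i: "i \<in> {0..<d}"
      have "p i \<in> {0..<d}" using p i permutes_in_image by fastforce
      then show "0 \<le> \<bar>N $$ (i, p i)\<bar> \<and> \<bar>N $$ (i, p i)\<bar> \<le> g" using b i by auto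
    qed
    finally show "\<bar>signof p * (\<Prod>i = 0..<d. N $$ (i, p i))\<bar> \<le> g ^ d" by simp
  qed
  also have "\<dots> = fact d * g ^ d"
    using card_permutations[of "{0..<d}" d] by simp
  finally show ?thesis .
qed

lemma recover:
  fixes G :: "real mat"
  assumes G: "G \<in> carrier_mat n n" and D: "\<bar>det G\<bar> \<ge> 1" and g: "g \<ge> 0"
    and b: "\<And>i j. i < n \<Longrightarrow> j < n \<Longrightarrow> \<bar>G $$ (i,j)\<bar> \<le> g"
    and v: "v \<in> carrier_vec n" and j: "j < n"
  shows "\<bar>v $ j\<bar> \<le> fact (n-1) * g^(n-1) * (\<Sum>a<n. \<bar>(G *\<^sub>v v) $ a\<bar>)"
proof -
  let ?\<alpha> = "fact (n-1) * g^(n-1) :: real"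
  have adj: "adj_mat G * G = det G \<cdot>\<^sub>m 1\<^sub>m n" "adj_mat G \<in> carrier_mat n n" using adj_mat[OF G] by auto
  have "(adj_mat G * G) *\<^sub>v v = adj_mat G *\<^sub>v (G *\<^sub>v v)"
    using adj G v by (meson assoc_mult_mat_vec)
  moreover have "((det G \<cdot>\<^sub>m 1\<^sub>m n) *\<^sub>v v) $ j = det G * v $ j"
  proof -
    have "((det G \<cdot>\<^sub>m 1\<^sub>m n) *\<^sub>v v) $ j = row (det G \<cdot>\<^sub>m 1\<^sub>m n) j \<bullet> v" using j by simp
    also have "\<dots> = det G * (row (1\<^sub>m n) j \<bullet> v)" using j v by simp
    also have "\<dots> = det G * ((1\<^sub>m n *\<^sub>v v) $ j)" using j by simp
    also have "\<dots> = det G * v $ j" using v by simp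
    finally show ?thesis .
  qed
  ultimately have "(adj_mat G *\<^sub>v (G *\<^sub>v v)) $ j = det G * v $ j"
    using adj by simp
  hence eq: "det G * v $ j = (\<Sum>a<n. adj_mat G $$ (j,a) * (G *\<^sub>v v) $ a)"
    using adj j G by (auto simp: scalar_prod_def row_def lessThan_atLeast0)
  have cof: "\<bar>adj_mat G $$ (j,a)\<bar> \<le> ?\<alpha>" if a: "a < n" for a
  proof -
    have "adj_mat G $$ (j,a) = cofactor G a j" using G j a by (simp add: adj_mat_def)
    hence "\<bar>adj_mat G $$ (j,a)\<bar> = \<bar>det (mat_delete G a j)\<bar>" by (simp add: cofactor_def abs_mult)
    also have "\<dots> \<le> ?\<alpha>"
    proof (rule det_bound[OF _ g])
      show "mat_delete G a j \<in> carrier_mat (n-1) (n-1)" using mat_delete_carrier[OF G] .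
      fix i' j' assume "i' < n - 1" "j' < n - 1"
      then show "\<bar>mat_delete G a j $$ (i', j')\<bar> \<le> g"
        using G by (auto simp: mat_delete_def intro!: b)
    qed
    finally show ?thesis .
  qed
  have "\<bar>v $ j\<bar> \<le> \<bar>det G * v $ j\<bar>" using D by (simp add: abs_mult mult_le_cancel_right1)
  also have "\<dots> \<le> (\<Sum>a<n. \<bar>adj_mat G $$ (j,a) * (G *\<^sub>v v) $ a\<bar>)" unfolding eq by (rule sum_abs)
  also have "\<dots> \<le> (\<Sum>a<n. ?\<alpha> * \<bar>(G *\<^sub>v v) $ a\<bar>)"
    proof (intro sum_mono)
    fix a assume "a \<in> {..<n}"
    then show "\<bar>adj_mat G $$ (j,a) * (G *\<^sub>v v) $ a\<bar> \<le> ?\<alpha> * \<bar>(G *\<^sub>v v) $ a\<bar>"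
      unfolding abs_mult by (intro mult_right_mono cof) auto
  qed
  finally show ?thesis by (simp add: sum_distrib_left)
qed

lemma pow_ceil_log:
  fixes x :: real assumes x: "x \<ge> 1"
  shows "x \<le> 2 ^ nat \<lceil>log 2 x\<rceil>"
proof -
  have l0: "log 2 x \<ge> 0" using x by simp
  have "x = 2 powr log 2 x" using x by simp
  also have "\<dots> \<le> 2 powr real (nat \<lceil>log 2 x\<rceil>)"
    using l0 by (intro powr_mono) (auto simp: le_nat_iff)
  also have "\<dots> = 2 ^ nat \<lceil>log 2 x\<rceil>" by (simp add: powr_realpow)
  finally show ?thesis .
qed

lemma rat_size_bound:
  assumes "quotient_of r = (p, q)"
  shows "2 * (real_of_int \<bar>p\<bar> + 1) * (real_of_int q + 1) \<le> 2 ^ rat_size r"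
proof -
  have q: "q > 0" using quotient_of_denom_pos[OF assms] .
  have a: "real_of_int \<bar>p\<bar> + 1 \<le> 2 ^ nat \<lceil>log 2 (real_of_int (\<bar>p\<bar> + 1))\<rceil>"
    using pow_ceil_log[of "real_of_int (\<bar>p\<bar> + 1)"] by simp
  have b: "real_of_int q + 1 \<le> 2 ^ nat \<lceil>log 2 (real_of_int (q + 1))\<rceil>"
    using pow_ceil_log[of "real_of_int (q + 1)"] q by simp
  have "2 * (real_of_int \<bar>p\<bar> + 1) * (real_of_int q + 1) \<le>
     2 * 2 ^ nat \<lceil>log 2 (real_of_int (\<bar>p\<bar> + 1))\<rceil> * 2 ^ nat \<lceil>log 2 (real_of_int (q + 1))\<rceil>"
    using a b q by (intro mult_mono) auto
  also have "\<dots> = 2 ^ rat_size r"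
    unfolding rat_size_def int_size_def assms by (simp add: power_add)
  finally show ?thesis .
qed

lemma rat_size_pow2:
  "rat_size (1 / of_int (2 ^ N)) \<le> N + 3"
proof -
  have "1 / (of_int (2 ^ N) :: rat) = Rat.Fract 1 (2 ^ N)" by (simp add: Fract_of_int_quotient)
  hence "quotient_of (1 / of_int (2 ^ N) :: rat) = (1, 2 ^ N)"
    by (simp add: quotient_of_Fract normalize_def)
  hence e: "rat_size (1 / of_int (2 ^ N)) = int_size 1 + nat \<lceil>log 2 (real_of_int (2 ^ N + 1))\<rceil>"
    unfolding rat_size_def by simp
  have i1: "int_size 1 = 2" unfolding int_size_def by simp
  have "log 2 (real_of_int (2 ^ N + 1)) \<le> log 2 (2 ^ (N+1))"
    by (subst log_le_cancel_iff) (auto intro: add_pos_pos)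
  also have "\<dots> = N + 1" by (subst log_nat_power) auto
  finally have "\<lceil>log 2 (real_of_int (2 ^ N + 1))\<rceil> \<le> int N + 1"
    by (simp add: ceiling_le_iff)
  hence "nat \<lceil>log 2 (real_of_int (2 ^ N + 1))\<rceil> \<le> N + 1" by linarith
  thus ?thesis using e i1 by simp
qed

lemma scale:
  fixes A :: "nat \<Rightarrow> nat \<Rightarrow> rat"
  obtains L :: int and B :: "nat \<Rightarrow> nat \<Rightarrow> int" where "L \<ge> 1" "real_of_int L \<le> 2 ^ mat_size m n A"
    "\<And>i j. i < m \<Longrightarrow> j < n \<Longrightarrow> real_of_rat (A i j) * real_of_int L = real_of_int (B i j)"
    "\<And>i j. i < m \<Longrightarrow> j < n \<Longrightarrow> real_of_int \<bar>B i j\<bar> \<le> 4 ^ mat_size m n A"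
proof -
  define T where "T = mat_size m n A"
  define P where "P i j = fst (quotient_of (A i j))" for i j
  define Q where "Q i j = snd (quotient_of (A i j))" for i j
  have PQ: "quotient_of (A i j) = (P i j, Q i j)" for i j by (simp add: P_def Q_def)
  have qpos: "Q i j > 0" for i j using quotient_of_denom_pos[OF PQ] .
  have Aeq: "real_of_rat (A i j) = real_of_int (P i j) / real_of_int (Q i j)" for i j
    using quotient_of_div[OF PQ[of i j]] by (simp add: of_rat_divide)
  have rsT: "rat_size (A i j) \<le> T" if "i < m" "j < n" for i j
  proof -
    have "rat_size (A i j) \<le> (\<Sum>j<n. rat_size (A i j))" using that by (intro member_le_sum) auto
    also have "\<dots> \<le> (\<Sum>i<m. \<Sum>j<n. rat_size (A i j))" using that
      by (intro member_le_sum[where f = "\<lambda>i. \<Sum>j<n. rat_size (A i j)"]) auto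
    finally show ?thesis unfolding T_def mat_size_def by simp
  qed
  have sb: "2 * (real_of_int \<bar>P i j\<bar> + 1) * (real_of_int (Q i j) + 1) \<le> 2 ^ rat_size (A i j)" for i j
    using rat_size_bound[OF PQ] .
  have Qb: "real_of_int (Q i j) \<le> 2 ^ rat_size (A i j)" for i j
  proof -
    have "real_of_int (Q i j) \<le> 2 * (real_of_int \<bar>P i j\<bar> + 1) * (real_of_int (Q i j) + 1)"
      using qpos[of i j] by (smt (verit, ccfv_SIG) mult_le_cancel_right1 of_int_0_le_iff of_int_pos abs_ge_zero)
    thus ?thesis using sb[of i j] by linarith
  qed
  have Pb: "real_of_int \<bar>P i j\<bar> \<le> 2 ^ rat_size (A i j)" for i j
  proof -
    have "real_of_int \<bar>P i j\<bar> \<le> 2 * (real_of_int \<bar>P i j\<bar> + 1) * (real_of_int (Q i j) + 1)"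
      using qpos[of i j] by (smt (verit, ccfv_SIG) mult_le_cancel_left1 of_int_0_le_iff of_int_pos abs_ge_zero)
    thus ?thesis using sb[of i j] by linarith
  qed
  define L where "L = (\<Prod>i<m. \<Prod>j<n. Q i j)"
  have L1: "L \<ge> 1" unfolding L_def
    by (intro prod_ge_1) (use qpos in \<open>auto simp: int_one_le_iff_zero_less\<close>)
  have "real_of_int L = (\<Prod>i<m. \<Prod>j<n. real_of_int (Q i j))" unfolding L_def by simp
  also have "\<dots> \<le> (\<Prod>i<m. \<Prod>j<n. 2 ^ rat_size (A i j))"
    by (intro prod_mono conjI prod_nonneg) (use qpos Qb in \<open>auto intro: less_imp_le\<close>)
  also have "\<dots> = 2 ^ (\<Sum>i<m. \<Sum>j<n. rat_size (A i j))" by (simp add: power_sum)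
  also have "\<dots> \<le> 2 ^ T" unfolding T_def mat_size_def by (intro power_increasing) auto
  finally have LT: "real_of_int L \<le> 2 ^ T" .
  have dv: "Q i j dvd L" if "i < m" "j < n" for i j
  proof -
    have "Q i j dvd (\<Prod>j<n. Q i j)" using that by (intro dvd_prodI) auto
    also have "\<dots> dvd L" unfolding L_def using that by (intro dvd_prodI) auto
    finally show ?thesis .
  qed
  define B where "B i j = P i j * (L div Q i j)" for i j
  have Beq: "real_of_rat (A i j) * real_of_int L = real_of_int (B i j)" if "i < m" "j < n" for i j
  proof -
    have "real_of_int (L div Q i j) = real_of_int L / real_of_int (Q i j)"
      using dv[OF that] by (simp add: real_of_int_div)
    thus ?thesis unfolding B_def Aeq by simp
  qed
  have Bb: "real_of_int \<bar>B i j\<bar> \<le> 4 ^ T" if "i < m" "j < n" for i j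
  proof -
    have "real_of_int \<bar>B i j\<bar> = \<bar>real_of_int (B i j)\<bar>" by simp
    also have "\<dots> = real_of_int \<bar>P i j\<bar> / real_of_int (Q i j) * real_of_int L"
      unfolding Beq[OF that, symmetric] Aeq using L1 qpos[of i j] by (simp add: abs_mult abs_divide)
    also have "\<dots> \<le> real_of_int \<bar>P i j\<bar> * real_of_int L"
      using qpos[of i j] L1 by (intro mult_right_mono) (auto simp: divide_le_eq mult_le_cancel_left1)
    also have "\<dots> \<le> 2 ^ T * 2 ^ T"
    proof (intro mult_mono)
      show "real_of_int \<bar>P i j\<bar> \<le> 2 ^ T"
        using Pb[of i j] power_increasing[OF rsT[OF that], of "2::real"] by linarith
    qed (use LT L1 in auto)
    also have "\<dots> = 4 ^ T" by (simp add: power_mult_distrib[symmetric])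
    finally show ?thesis .
  qed
  show ?thesis using that[OF L1 LT[unfolded T_def] Beq Bb[unfolded T_def]] by blast
qed

lemma spark_le:
  assumes "in_Rn n x" "x \<noteq> (\<lambda>_. 0)" "mat_vec m n A x = (\<lambda>_. 0)"
  shows "spark m n A \<le> enat (l0 n x)"
  unfolding spark_def using assms by (intro INF_lower) auto

lemma nonsing:
  fixes B :: "nat \<Rightarrow> nat \<Rightarrow> int" and L :: real
  assumes sp: "spark m n A > enat k"
    and L: "L \<noteq> 0"
    and Beq: "\<And>i j. i < m \<Longrightarrow> j < n \<Longrightarrow> real_of_rat (A i j) * L = real_of_int (B i j)"
    and S: "S \<subseteq> {..<n}" "card S \<le> k"
  shows "det (mat n n (\<lambda>(a,b). if a \<in> S \<and> b \<in> S then \<Sum>r<m. B r a * B r b else if a = b then 1 else 0) :: int mat) \<noteq> 0"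
    (is "det ?G \<noteq> 0")
proof
  assume "det ?G = 0"
  then obtain w where w: "w \<in> carrier_vec n" "w \<noteq> 0\<^sub>v n" "?G *\<^sub>v w = 0\<^sub>v n"
    using det_0_iff_vec_prod_zero[of ?G n] by auto
  have comp: "(?G *\<^sub>v w) $ a = (\<Sum>b<n. ?G $$ (a,b) * w $ b)" if "a < n" for a
    using that w(1) by (simp add: scalar_prod_def row_def lessThan_atLeast0)
  have wS: "w $ a = 0" if "a < n" "a \<notin> S" for a
  proof -
    have "0 = (\<Sum>b<n. ?G $$ (a,b) * w $ b)" using comp[OF that(1)] w(3) that by simp
    also have "\<dots> = (\<Sum>b<n. (if a = b then w $ b else 0))"
      using that by (intro sum.cong) auto
    also have "\<dots> = w $ a" using that by simp
    finally show ?thesis by simp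
  qed
  define z where "z r = (\<Sum>b<n. B r b * w $ b)" for r
  have zS: "(\<Sum>r<m. B r a * z r) = 0" if "a \<in> S" for a
  proof -
    have a: "a < n" using that S by auto
    have "0 = (\<Sum>b<n. ?G $$ (a,b) * w $ b)" using comp[OF a] w(3) a by simp
    also have "\<dots> = (\<Sum>b<n. (\<Sum>r<m. B r a * B r b) * w $ b)"
      using that wS a by (intro sum.cong) auto
    also have "\<dots> = (\<Sum>r<m. B r a * z r)"
      unfolding z_def by (simp add: sum_distrib_left sum_distrib_right mult.assoc sum.swap[of _ "{..<n}"])
    finally show ?thesis by simp
  qed
  have "(\<Sum>r<m. z r ^ 2) = (\<Sum>r<m. z r * (\<Sum>b<n. B r b * w $ b))"
    unfolding z_def by (simp add: power2_eq_square)
  also have "\<dots> = (\<Sum>b<n. w $ b * (\<Sum>r<m. B r b * z r))"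
    by (simp add: sum_distrib_left sum_distrib_right mult_ac sum.swap[of _ "{..<m}"])
  also have "\<dots> = 0"
    using wS zS by (intro sum.neutral) auto
  finally have "(\<Sum>r<m. z r ^ 2) = 0" .
  hence z0: "z r = 0" if "r < m" for r
    using that by (subst (asm) sum_nonneg_eq_0_iff) auto
  define x where "x j = (if j < n then real_of_int (w $ j) else 0)" for j
  have inR: "in_Rn n x" unfolding in_Rn_def x_def by auto
  have nz: "x \<noteq> (\<lambda>_. 0)"
  proof
    assume "x = (\<lambda>_. 0)"
    hence "w = 0\<^sub>v n" using w(1) by (intro eq_vecI) (auto simp: x_def fun_eq_iff split: if_splits)
    thus False using w(2) by simp
  qed
  have Ax: "mat_vec m n A x = (\<lambda>_. 0)"
  proof
    fix r show "mat_vec m n A x r = 0"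
    proof (cases "r < m")
      case True
      have "(\<Sum>j<n. real_of_rat (A r j) * x j) = (\<Sum>j<n. real_of_int (B r j) / L * real_of_int (w $ j))"
        using Beq[OF True] L by (intro sum.cong) (auto simp: x_def field_simps)
      also have "\<dots> = real_of_int (z r) / L"
        unfolding z_def by (simp add: sum_divide_distrib)
      also have "\<dots> = 0" using z0[OF True] by simp
      finally show ?thesis unfolding mat_vec_def using True by simp
    qed (simp add: mat_vec_def)
  qed
  have "l0 n x \<le> card S" unfolding l0_def
    using S wS by (intro card_mono) (auto simp: x_def finite_subset)
  hence "spark m n A \<le> enat k"
    using spark_le[OF inR nz Ax] S(2) by (meson enat_ord_simps(1) le_trans order_trans)
  thus False using sp by simp
qed

lemma cs_sum:
  fixes a :: "nat \<Rightarrow> real"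
  shows "(\<Sum>r<m. a r)^2 \<le> real m * (\<Sum>r<m. (a r)^2)"
proof -
  have "0 \<le> (\<Sum>r<m. \<Sum>s<m. (a r - a s)^2)" by (intro sum_nonneg) auto
  also have "\<dots> = (\<Sum>r<m. \<Sum>s<m. (a r)^2 + (a s)^2 - 2 * a r * a s)"
    by (intro sum.cong refl) (simp add: power2_diff)
  also have "\<dots> = (\<Sum>r<m. real m * (a r)^2 + (\<Sum>s<m. (a s)^2) - 2 * a r * (\<Sum>s<m. a s))"
    by (simp add: sum.distrib sum_subtractf sum_distrib_left)
  also have "\<dots> = 2 * (real m * (\<Sum>r<m. (a r)^2)) - 2 * (\<Sum>r<m. a r)^2"
    by (simp add: sum.distrib sum_subtractf sum_distrib_left sum_distrib_right power2_eq_square mult_ac)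
  finally show ?thesis by simp
qed

lemma core:
  fixes A :: "nat \<Rightarrow> nat \<Rightarrow> rat"
  assumes k: "0 < k" "k \<le> n" and sp: "spark m n A > enat k" and x: "in_Rn n x" "l0 n x \<le> k"
  shows "sq_norm2 n x \<le> 2 ^ (12 * (mat_size m n A)^2 + 10 * mat_size m n A) * sq_norm2 m (mat_vec m n A x)"
proof -
  define T where "T = mat_size m n A"
  obtain L :: int and B :: "nat \<Rightarrow> nat \<Rightarrow> int" where L1: "L \<ge> 1" and LT: "real_of_int L \<le> 2 ^ T"
    and Beq: "\<And>i j. i < m \<Longrightarrow> j < n \<Longrightarrow> real_of_rat (A i j) * real_of_int L = real_of_int (B i j)"
    and Bb: "\<And>i j. i < m \<Longrightarrow> j < n \<Longrightarrow> real_of_int \<bar>B i j\<bar> \<le> 4 ^ T"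
    using scale[of m n A] unfolding T_def by metis
  define \<beta> :: real where "\<beta> = 4 ^ T"
  define \<gamma> :: real where "\<gamma> = 2 ^ (5 * T)"
  have n1: "n \<ge> 1" using k by simp
  have mnT: "m * n \<le> T" unfolding T_def mat_size_def by simp
  have m1: "m \<ge> 1"
  proof (rule ccontr)
    assume "\<not> m \<ge> 1" hence m0: "m = 0" by simp
    define x0 :: "nat \<Rightarrow> real" where "x0 j = (if j = 0 then 1 else 0)" for j
    have "in_Rn n x0" using n1 unfolding in_Rn_def x0_def by auto
    moreover have "x0 \<noteq> (\<lambda>_. 0)" unfolding x0_def by (metis one_neq_zero)
    moreover have "mat_vec m n A x0 = (\<lambda>_. 0)" unfolding mat_vec_def m0 by simp
    moreover have "{j. j < n \<and> x0 j \<noteq> 0} = {0}" using n1 unfolding x0_def by auto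
    hence "l0 n x0 = 1" unfolding l0_def by simp
    ultimately have "spark m n A \<le> enat 1" using spark_le by metis
    hence "spark m n A \<le> enat k" using k(1) order_trans[of "spark m n A" "enat 1" "enat k"] by simp
    thus False using sp by simp
  qed
  have nT: "n \<le> T" using mnT m1 le_trans[of n "m*n" T] by simp
  have mT: "m \<le> T" using mnT n1 le_trans[of m "m*n" T] by simp
  have T2: "real T \<le> 2 ^ T"
  proof -
    have "T \<le> 2 ^ T" using less_exp[of T] by simp
    hence "real T \<le> real (2 ^ T)" by (simp only: of_nat_le_iff)
    thus ?thesis by simp
  qed
  have p4: "(4::real) ^ j = 2 ^ (2 * j)" for j by (simp add: power_mult)
  have n2: "real n \<le> 2 ^ T" using nT T2 by linarith
  have m2: "real m \<le> 2 ^ T" using mT T2 by linarith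
  define y where "y r = (\<Sum>j<n. real_of_int (B r j) * x j)" for r
  have Lpos: "real_of_int L > 0" using L1 by simp
  have Ax: "mat_vec m n A x r = y r / real_of_int L" if "r < m" for r
  proof -
    have "(\<Sum>j<n. real_of_rat (A r j) * x j) = (\<Sum>j<n. real_of_int (B r j) / real_of_int L * x j)"
      using Beq[OF that] Lpos by (intro sum.cong refl) (auto simp: field_simps)
    thus ?thesis unfolding mat_vec_def y_def using that by (simp add: sum_divide_distrib)
  qed
  have normA: "sq_norm2 m (mat_vec m n A x) = (\<Sum>r<m. (y r)^2) / (real_of_int L)^2"
    unfolding sq_norm2_def using Ax by (simp add: sum_divide_distrib power_divide)
  define S where "S = {j. j < n \<and> x j \<noteq> 0}"
  have S: "S \<subseteq> {..<n}" "card S \<le> k" using x(2) unfolding S_def l0_def by auto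
  define Gi :: "int mat" where "Gi = mat n n (\<lambda>(a,b). if a \<in> S \<and> b \<in> S then \<Sum>r<m. B r a * B r b else if a = b then 1 else 0)"
  have detGi: "det Gi \<noteq> 0" unfolding Gi_def
    by (rule nonsing[OF sp _ Beq S]) (use Lpos in auto)
  define G where "G = map_mat real_of_int Gi"
  have Gc: "G \<in> carrier_mat n n" unfolding G_def Gi_def by simp
  have detG: "\<bar>det G\<bar> \<ge> 1" unfolding G_def of_int_hom.hom_det using detGi by linarith
  have \<beta>1: "\<beta> \<ge> 1" unfolding \<beta>_def by simp
  have \<gamma>1: "\<gamma> \<ge> 1" unfolding \<gamma>_def by simp
  have Gb: "\<bar>G $$ (a,b)\<bar> \<le> \<gamma>" if "a < n" "b < n" for a b
  proof (cases "a \<in> S \<and> b \<in> S")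
    case True
    have "\<bar>G $$ (a,b)\<bar> = \<bar>\<Sum>r<m. real_of_int (B r a) * real_of_int (B r b)\<bar>"
      unfolding G_def Gi_def using that True by simp
    also have "\<dots> \<le> (\<Sum>r<m. \<bar>real_of_int (B r a) * real_of_int (B r b)\<bar>)" by (rule sum_abs)
    also have "\<dots> \<le> (\<Sum>r<m. \<beta> * \<beta>)"
      using Bb that unfolding \<beta>_def by (intro sum_mono) (auto simp: abs_mult intro!: mult_mono)
    also have "\<dots> = real m * (\<beta> * \<beta>)" by simp
    also have "\<dots> \<le> 2 ^ T * (4 ^ T * 4 ^ T)" unfolding \<beta>_def using m2 by (intro mult_right_mono) auto
    also have "\<dots> = \<gamma>" unfolding \<gamma>_def p4 by (simp add: power_add[symmetric])
    finally show ?thesis .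
  next
    case False
    then show ?thesis unfolding G_def Gi_def using that \<gamma>1 by auto
  qed
  define v where "v = vec n x"
  have Gv: "(G *\<^sub>v v) $ a = (if a \<in> S then \<Sum>r<m. real_of_int (B r a) * y r else 0)" if "a < n" for a
  proof -
    have "(G *\<^sub>v v) $ a = (\<Sum>b<n. G $$ (a,b) * x b)"
      using that Gc by (simp add: v_def scalar_prod_def row_def lessThan_atLeast0)
    also have "\<dots> = (if a \<in> S then \<Sum>r<m. real_of_int (B r a) * y r else 0)"
    proof (cases "a \<in> S")
      case True
      have "(\<Sum>b<n. G $$ (a,b) * x b) = (\<Sum>b<n. (\<Sum>r<m. real_of_int (B r a) * real_of_int (B r b)) * x b)"
        using that True by (intro sum.cong refl) (auto simp: G_def Gi_def S_def)
      also have "\<dots> = (\<Sum>r<m. real_of_int (B r a) * y r)"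
        unfolding y_def by (simp add: sum_distrib_left sum_distrib_right mult.assoc sum.swap[of _ "{..<n}"])
      finally show ?thesis using True by simp
    next
      case False
      have "(\<Sum>b<n. G $$ (a,b) * x b) = (\<Sum>b<n. (if a = b then x b else 0))"
        using that False by (intro sum.cong refl) (auto simp: G_def Gi_def)
      also have "\<dots> = 0" using that False by (simp add: S_def)
      finally show ?thesis using False by simp
    qed
    finally show ?thesis .
  qed
  define Y1 where "Y1 = (\<Sum>r<m. \<bar>y r\<bar>)"
  have Y0: "Y1 \<ge> 0" unfolding Y1_def by (simp add: sum_nonneg)
  have Gvb: "\<bar>(G *\<^sub>v v) $ a\<bar> \<le> \<beta> * Y1" if "a < n" for a
  proof (cases "a \<in> S")
    case True
    have "\<bar>(G *\<^sub>v v) $ a\<bar> \<le> (\<Sum>r<m. \<bar>real_of_int (B r a) * y r\<bar>)"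
      unfolding Gv[OF that] using True by (simp add: sum_abs)
    also have "\<dots> \<le> (\<Sum>r<m. \<beta> * \<bar>y r\<bar>)"
      using Bb that unfolding \<beta>_def by (intro sum_mono) (auto simp: abs_mult intro!: mult_right_mono)
    finally show ?thesis unfolding Y1_def by (simp add: sum_distrib_left)
  next
    case False
    then show ?thesis unfolding Gv[OF that] using Y0 \<beta>1 by simp
  qed
  define \<alpha> :: real where "\<alpha> = fact (n-1) * \<gamma>^(n-1)"
  have \<alpha>0: "\<alpha> \<ge> 0" unfolding \<alpha>_def using \<gamma>1 by simp
  have xb: "\<bar>x j\<bar> \<le> \<alpha> * (real n * (\<beta> * Y1))" if "j < n" for j
  proof -
    have "\<bar>x j\<bar> = \<bar>v $ j\<bar>" using that by (simp add: v_def)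
    also have "\<dots> \<le> \<alpha> * (\<Sum>a<n. \<bar>(G *\<^sub>v v) $ a\<bar>)" unfolding \<alpha>_def
      by (rule recover[OF Gc detG _ Gb]) (use \<gamma>1 that in \<open>auto simp: v_def\<close>)
    also have "\<dots> \<le> \<alpha> * (\<Sum>a<n. \<beta> * Y1)"
      using Gvb \<alpha>0 by (intro mult_left_mono sum_mono) auto
    finally show ?thesis by simp
  qed
  define C where "C = \<alpha> * (real n * (\<beta> * Y1))"
  have C0: "C \<ge> 0" unfolding C_def using \<alpha>0 \<beta>1 Y0 by simp
  have "sq_norm2 n x \<le> (\<Sum>j<n. C^2)" unfolding sq_norm2_def
  proof (intro sum_mono)
    fix j assume "j \<in> {..<n}"
    hence "\<bar>x j\<bar> \<le> C" using xb unfolding C_def by auto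
    thus "(x j)^2 \<le> C^2" by (metis abs_ge_zero power2_abs power_mono)
  qed
  also have "\<dots> = real n * \<alpha>^2 * (real n)^2 * \<beta>^2 * Y1^2" unfolding C_def by (simp add: power_mult_distrib)
  also have "\<dots> \<le> real n * \<alpha>^2 * (real n)^2 * \<beta>^2 * (real m * (\<Sum>r<m. (y r)^2))"
    unfolding Y1_def using cs_sum[of "\<lambda>r. \<bar>y r\<bar>" m] by (intro mult_left_mono) auto
  also have "\<dots> = (real n * \<alpha>^2 * (real n)^2 * \<beta>^2 * real m * (real_of_int L)^2) * sq_norm2 m (mat_vec m n A x)"
  proof -
    have e: "(\<Sum>r<m. (y r)^2) = sq_norm2 m (mat_vec m n A x) * (real_of_int L)^2"
      unfolding normA using Lpos by simp
    show ?thesis unfolding e by (simp only: mult_ac)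
  qed
  also have "\<dots> \<le> 2 ^ (12 * T^2 + 10 * T) * sq_norm2 m (mat_vec m n A x)"
  proof (rule mult_right_mono)
    show "0 \<le> sq_norm2 m (mat_vec m n A x)" unfolding sq_norm2_def by (simp add: sum_nonneg)
    have fa: "fact (n-1) \<le> (2::real) ^ (T * T)"
    proof -
      have "fact (n-1) \<le> (of_nat ((n-1)^(n-1)) :: real)" by (rule fact_le_power)
      also have "\<dots> = real (n-1) ^ (n-1)" by simp
      also have "\<dots> \<le> real T ^ (n-1)" using nT by (intro power_mono) auto
      also have "\<dots> \<le> real T ^ T" using nT n1 by (intro power_increasing) auto
      also have "\<dots> \<le> (2 ^ T) ^ T" using T2 by (intro power_mono) auto
      finally show ?thesis by (simp add: power_mult)
    qed
    have ga: "\<gamma>^(n-1) \<le> 2 ^ (5 * T * T)"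
    proof -
      have "\<gamma>^(n-1) \<le> \<gamma>^T" using nT \<gamma>1 by (intro power_increasing) auto
      thus ?thesis unfolding \<gamma>_def by (simp add: power_mult)
    qed
    have al: "\<alpha> \<le> 2 ^ (6 * T * T)"
    proof -
      have "\<alpha> \<le> 2 ^ (T * T) * 2 ^ (5 * T * T)" unfolding \<alpha>_def
        using fa ga \<gamma>1 by (intro mult_mono) auto
      thus ?thesis by (simp add: power_add[symmetric] mult.assoc)
    qed
    have "real n * \<alpha>^2 * (real n)^2 * \<beta>^2 * real m * (real_of_int L)^2 \<le>
       2^T * (2 ^ (6 * T * T))^2 * (2^T)^2 * (4^T)^2 * 2^T * (2^T)^2"
    proof -
      have f2: "\<alpha>^2 \<le> (2 ^ (6 * T * T))^2" using al \<alpha>0 by (intro power_mono) auto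
      have f3: "(real n)^2 \<le> (2^T)^2" using n2 by (intro power_mono) auto
      have f6: "(real_of_int L)^2 \<le> (2^T)^2" using LT Lpos by (intro power_mono) auto
      show ?thesis unfolding \<beta>_def
        apply (intro mult_mono n2 f2 f3 order_refl m2 f6)
        apply (simp_all add: \<alpha>0)
        done
    qed
    also have "\<dots> = 2 ^ (12 * T^2 + 10 * T)"
      by (simp only: p4 power_mult[symmetric] power_add[symmetric]) (simp add: power2_eq_square algebra_simps)
    finally show "real n * \<alpha>^2 * (real n)^2 * \<beta>^2 * real m * (real_of_int L)^2 \<le> 2 ^ (12 * T^2 + 10 * T)" .
  qed
  finally show ?thesis unfolding T_def .
qed

theorem lemma5:
  "\<exists>c d :: nat. \<forall>m n (A :: nat \<Rightarrow> nat \<Rightarrow> rat) k.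
     0 < k \<and> k \<le> n \<and> spark m n A > enat k \<longrightarrow>
     (\<exists>\<epsilon> :: rat. \<epsilon> > 0 \<and> rat_size \<epsilon> \<le> c * (mat_size m n A + 1) ^ d \<and>
        (\<forall>x. in_Rn n x \<and> l0 n x \<le> k \<longrightarrow>
           sq_norm2 m (mat_vec m n A x) \<ge> real_of_rat \<epsilon> * sq_norm2 n x))"
proof (rule exI[of _ 25], rule exI[of _ 2], intro allI impI)
  fix m n k and A :: "nat \<Rightarrow> nat \<Rightarrow> rat"
  assume h: "0 < k \<and> k \<le> n \<and> spark m n A > enat k"
  define T where "T = mat_size m n A"
  define N where "N = 12 * T^2 + 10 * T"
  define \<epsilon> :: rat where "\<epsilon> = 1 / of_int (2 ^ N)"
  show "\<exists>\<epsilon> :: rat. \<epsilon> > 0 \<and> rat_size \<epsilon> \<le> 25 * (mat_size m n A + 1) ^ 2 \<and>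
        (\<forall>x. in_Rn n x \<and> l0 n x \<le> k \<longrightarrow>
           sq_norm2 m (mat_vec m n A x) \<ge> real_of_rat \<epsilon> * sq_norm2 n x)"
  proof (rule exI[of _ \<epsilon>], intro conjI allI impI)
    show "\<epsilon> > 0" unfolding \<epsilon>_def by simp
    have "rat_size \<epsilon> \<le> N + 3" unfolding \<epsilon>_def by (rule rat_size_pow2)
    also have "\<dots> \<le> 25 * (T + 1) ^ 2" unfolding N_def by (simp add: power2_eq_square algebra_simps)
    finally show "rat_size \<epsilon> \<le> 25 * (mat_size m n A + 1) ^ 2" unfolding T_def .
    fix x assume x: "in_Rn n x \<and> l0 n x \<le> k"
    have c: "sq_norm2 n x \<le> 2 ^ N * sq_norm2 m (mat_vec m n A x)"
      using core[of k n m A x] h x unfolding N_def T_def by blast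
    have e: "real_of_rat \<epsilon> = 1 / 2 ^ N" unfolding \<epsilon>_def by (simp add: of_rat_divide of_rat_power)
    have "real_of_rat \<epsilon> * sq_norm2 n x \<le> (1 / 2 ^ N) * (2 ^ N * sq_norm2 m (mat_vec m n A x))"
      unfolding e using c by (intro mult_left_mono) auto
    also have "\<dots> = sq_norm2 m (mat_vec m n A x)" by simp
    finally show "sq_norm2 m (mat_vec m n A x) \<ge> real_of_rat \<epsilon> * sq_norm2 n x" .
  qed
qed

end
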